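(* Let $G$ be the infinite king grid and let $C\subseteq\mathbb{Z}^2$ be a solid-locating-dominating code in $G$. Then for all $i,j\in\mathbb{Z}$, the set $T=\{(i,j),(i,j+1),(i,j+2),(i+1,j+2),(i-1,j+2)\}$ contains a codeword of $C$, and so does every set obtained from such a $T$ by a rotation of $\pi/2$, $\pi$ or $3\pi/2$ radians around the origin.
   Context: The infinite king grid $G=(V,E)$ has $V=\mathbb{Z}^2$, and distinct vertices $(u_1,u_2)$, $(v_1,v_2)$ are adjacent iff $|u_1-v_1|\le1$ and $|u_2-v_2|\le1$. $N[v]$ is the closed neighbourhood of $v$, and for a code (nonempty subset) $C\subseteq V$, $I(C;v)=N[v]\cap C$. A code $C$ is solid-locating-dominating if for all distinct $u,v\in V\setminus C$, $I(C;u)\setminus I(C;v)\ne\emptyset$. *)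

theory Defs
  imports Main
begin

type_synonym vertex = "int \<times> int"

definition king_adj :: "vertex \<Rightarrow> vertex \<Rightarrow> bool" where
  "king_adj u v \<longleftrightarrow> u \<noteq> v \<and> \<bar>fst u - fst v\<bar> \<le> 1 \<and> \<bar>snd u - snd v\<bar> \<le> 1"

definition closed_nbhd :: "vertex \<Rightarrow> vertex set" where
  "closed_nbhd v = {v} \<union> {u. king_adj u v}"

definition I_set :: "vertex set \<Rightarrow> vertex \<Rightarrow> vertex set" where
  "I_set C v = closed_nbhd v \<inter> C"

definition solid_locating_dominating :: "vertex set \<Rightarrow> bool" where
  "solid_locating_dominating C \<longleftrightarrow> C \<noteq> {} \<and>
     (\<forall>u v. u \<notin> C \<longrightarrow> v \<notin> C \<longrightarrow> u \<noteq> v \<longrightarrow> I_set C u - I_set C v \<noteq> {})"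

definition rot90 :: "vertex \<Rightarrow> vertex" where
  "rot90 p = (- snd p, fst p)"

definition T_shape :: "int \<Rightarrow> int \<Rightarrow> vertex set" where
  "T_shape i j = {(i,j), (i,j+1), (i,j+2), (i+1,j+2), (i-1,j+2)}"

end

theory Submission
  imports Defs
begin

lemma key:
  assumes "solid_locating_dominating C" "a \<notin> C" "b \<notin> C" "a \<noteq> b"
    "p1 \<notin> C" "p2 \<notin> C" "p3 \<notin> C"
    "\<And>x. x \<in> closed_nbhd a \<Longrightarrow> x \<notin> closed_nbhd b \<Longrightarrow> x = p1 \<or> x = p2 \<or> x = p3"
  shows False
proof -
  have "I_set C a - I_set C b \<noteq> {}" using assms(1-4) unfolding solid_locating_dominating_def by blast
  then obtain x where "x \<in> closed_nbhd a" "x \<in> C" "x \<notin> closed_nbhd b" unfolding I_set_def by blast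
  then show False using assms(5-8) by blast
qed

lemma nb: "(x::vertex) \<in> closed_nbhd a \<longleftrightarrow> \<bar>fst x - fst a\<bar> \<le> 1 \<and> \<bar>snd x - snd a\<bar> \<le> 1"
  unfolding closed_nbhd_def king_adj_def by (cases x, cases a) auto

theorem lemma10:
  fixes C :: "vertex set"
  assumes "solid_locating_dominating C"
  shows "\<forall>i j. \<forall>k\<in>{0::nat,1,2,3}. (rot90 ^^ k) ` T_shape i j \<inter> C \<noteq> {}"
proof (intro allI ballI)
  fix i j and k :: nat
  assume k: "k \<in> {0,1,2,3}"
  show "(rot90 ^^ k) ` T_shape i j \<inter> C \<noteq> {}"
  proof
    assume e: "(rot90 ^^ k) ` T_shape i j \<inter> C = {}"
    from k consider "k = 0" | "k = 1" | "k = 2" | "k = 3" by blast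
    then show False
    proof cases
      case 1
      with e have "(i,j) \<notin> C" "(i,j+1) \<notin> C" "(i,j+2) \<notin> C" "(i+1,j+2) \<notin> C" "(i-1,j+2) \<notin> C"
        by (auto simp: T_shape_def)
      then show False
        by (intro key[OF assms, of "(i,j+1)" "(i,j)" "(i,j+2)" "(i+1,j+2)" "(i-1,j+2)"]) (auto simp: nb)
    next
      case 2
      with e have "(-j,i) \<notin> C" "(-j-1,i) \<notin> C" "(-j-2,i) \<notin> C" "(-j-2,i+1) \<notin> C" "(-j-2,i-1) \<notin> C"
        by (auto simp: T_shape_def rot90_def)
      then show False
        by (intro key[OF assms, of "(-j-1,i)" "(-j,i)" "(-j-2,i)" "(-j-2,i+1)" "(-j-2,i-1)"]) (auto simp: nb)
    next
      case 3
      with e have "(-i,-j) \<notin> C" "(-i,-j-1) \<notin> C" "(-i,-j-2) \<notin> C" "(-i-1,-j-2) \<notin> C" "(-i+1,-j-2) \<notin> C"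
        by (auto simp: T_shape_def rot90_def numeral_eq_Suc)
      then show False
        by (intro key[OF assms, of "(-i,-j-1)" "(-i,-j)" "(-i,-j-2)" "(-i-1,-j-2)" "(-i+1,-j-2)"]) (auto simp: nb)
    next
      case 4
      with e have "(j,-i) \<notin> C" "(j+1,-i) \<notin> C" "(j+2,-i) \<notin> C" "(j+2,-i-1) \<notin> C" "(j+2,-i+1) \<notin> C"
        by (auto simp: T_shape_def rot90_def numeral_eq_Suc)
      then show False
        by (intro key[OF assms, of "(j+1,-i)" "(j,-i)" "(j+2,-i)" "(j+2,-i-1)" "(j+2,-i+1)"]) (auto simp: nb)
    qed
  qed
qed

end
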